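(* Let $G$ be a finite block graph that is identifiable, i.e. $G$ has no pair of distinct vertices $u,v$ with $N[u]=N[v]$. Then $\gamma^{ID}(G)\leq n_Q(G)$, where $n_Q(G)$ denotes the number of maximal cliques of $G$.
   Context: A block graph is a graph in which every maximal 2-connected subgraph (block) is a clique. For a vertex $u$, $N(u)$ is its open neighborhood and $N[u]=N(u)\cup\{u\}$ its closed neighborhood. A set $C\subseteq V(G)$ is an identifying code (ID-code) if $N[u]\cap C\neq\emptyset$ for every vertex $u$ and $N[u]\cap C\neq N[v]\cap C$ for all distinct vertices $u,v$. A graph admits an ID-code iff it is identifiable (has no distinct $u,v$ with $N[u]=N[v]$). $\gamma^{ID}(G)$ is the minimum cardinality of an ID-code of $G$. $n_Q(G)$ is the number of maximal cliques of $G$. *)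

theory Defs
  imports Main
begin

definition simple_graph :: "'a set \<Rightarrow> ('a \<Rightarrow> 'a \<Rightarrow> bool) \<Rightarrow> bool" where
  "simple_graph V E \<longleftrightarrow> finite V \<and> (\<forall>u v. E u v \<longrightarrow> u \<in> V \<and> v \<in> V)
     \<and> (\<forall>u v. E u v \<longrightarrow> E v u) \<and> (\<forall>u. \<not> E u u)"

definition open_nbhd :: "'a set \<Rightarrow> ('a \<Rightarrow> 'a \<Rightarrow> bool) \<Rightarrow> 'a \<Rightarrow> 'a set" where
  "open_nbhd V E u = {v \<in> V. E u v}"

definition closed_nbhd :: "'a set \<Rightarrow> ('a \<Rightarrow> 'a \<Rightarrow> bool) \<Rightarrow> 'a \<Rightarrow> 'a set" where
  "closed_nbhd V E u = insert u (open_nbhd V E u)"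

text \<open>Connectivity of the subgraph induced by S (the empty set counts as connected).\<close>
definition induced_connected :: "('a \<Rightarrow> 'a \<Rightarrow> bool) \<Rightarrow> 'a set \<Rightarrow> bool" where
  "induced_connected E S \<longleftrightarrow>
     (\<forall>u\<in>S. \<forall>v\<in>S. (u, v) \<in> {(x, y). x \<in> S \<and> y \<in> S \<and> E x y}\<^sup>*)"

definition biconnected_set :: "'a set \<Rightarrow> ('a \<Rightarrow> 'a \<Rightarrow> bool) \<Rightarrow> 'a set \<Rightarrow> bool" where
  "biconnected_set V E S \<longleftrightarrow> S \<subseteq> V \<and> card S \<ge> 2 \<and> induced_connected E S
     \<and> (\<forall>x\<in>S. induced_connected E (S - {x}))"

definition is_block :: "'a set \<Rightarrow> ('a \<Rightarrow> 'a \<Rightarrow> bool) \<Rightarrow> 'a set \<Rightarrow> bool" where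
  "is_block V E S \<longleftrightarrow> biconnected_set V E S
     \<and> (\<forall>T. biconnected_set V E T \<and> S \<subseteq> T \<longrightarrow> T = S)"

definition is_clique :: "'a set \<Rightarrow> ('a \<Rightarrow> 'a \<Rightarrow> bool) \<Rightarrow> 'a set \<Rightarrow> bool" where
  "is_clique V E C \<longleftrightarrow> C \<subseteq> V \<and> (\<forall>u\<in>C. \<forall>v\<in>C. u \<noteq> v \<longrightarrow> E u v)"

definition block_graph :: "'a set \<Rightarrow> ('a \<Rightarrow> 'a \<Rightarrow> bool) \<Rightarrow> bool" where
  "block_graph V E \<longleftrightarrow> simple_graph V E \<and> (\<forall>S. is_block V E S \<longrightarrow> is_clique V E S)"

definition is_maximal_clique :: "'a set \<Rightarrow> ('a \<Rightarrow> 'a \<Rightarrow> bool) \<Rightarrow> 'a set \<Rightarrow> bool" where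
  "is_maximal_clique V E C \<longleftrightarrow> is_clique V E C
     \<and> (\<forall>D. is_clique V E D \<and> C \<subseteq> D \<longrightarrow> D = C)"

definition n_Q :: "'a set \<Rightarrow> ('a \<Rightarrow> 'a \<Rightarrow> bool) \<Rightarrow> nat" where
  "n_Q V E = card {C. is_maximal_clique V E C}"

definition identifiable :: "'a set \<Rightarrow> ('a \<Rightarrow> 'a \<Rightarrow> bool) \<Rightarrow> bool" where
  "identifiable V E \<longleftrightarrow>
     (\<forall>u\<in>V. \<forall>v\<in>V. u \<noteq> v \<longrightarrow> closed_nbhd V E u \<noteq> closed_nbhd V E v)"

definition is_id_code :: "'a set \<Rightarrow> ('a \<Rightarrow> 'a \<Rightarrow> bool) \<Rightarrow> 'a set \<Rightarrow> bool" where
  "is_id_code V E C \<longleftrightarrow> C \<subseteq> V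
     \<and> (\<forall>u\<in>V. closed_nbhd V E u \<inter> C \<noteq> {})
     \<and> (\<forall>u\<in>V. \<forall>v\<in>V. u \<noteq> v \<longrightarrow> closed_nbhd V E u \<inter> C \<noteq> closed_nbhd V E v \<inter> C)"

text \<open>Minimum cardinality of an ID-code (meaningful when one exists).\<close>
definition gamma_ID :: "'a set \<Rightarrow> ('a \<Rightarrow> 'a \<Rightarrow> bool) \<Rightarrow> nat" where
  "gamma_ID V E = (LEAST k. \<exists>C. is_id_code V E C \<and> card C = k)"

end

theory Submission
  imports Defs
begin

definition Rel :: "('a \<Rightarrow> 'a \<Rightarrow> bool) \<Rightarrow> 'a set \<Rightarrow> ('a \<times> 'a) set" where
  "Rel E S = {(x, y). x \<in> S \<and> y \<in> S \<and> E x y}"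

definition propL :: "'a set \<Rightarrow> ('a \<Rightarrow> 'a \<Rightarrow> bool) \<Rightarrow> bool" where
  "propL V E \<longleftrightarrow> (\<forall>v xs. successively E xs \<and> distinct xs \<and> set xs \<subseteq> V \<and> v \<notin> set xs
     \<and> xs \<noteq> [] \<and> E v (hd xs) \<and> E v (last xs) \<and> hd xs \<noteq> last xs \<longrightarrow> E (hd xs) (last xs))"

lemma chain_conn:
  assumes "successively E xs" "set xs \<subseteq> T" "xs \<noteq> []"
  shows "\<forall>y\<in>set xs. (hd xs, y) \<in> (Rel E T)\<^sup>* \<and> (y, last xs) \<in> (Rel E T)\<^sup>*"
  using assms
proof (induction xs)
  case Nil thus ?case by simp
next
  case (Cons a xs)
  show ?case
  proof (cases "xs = []")
    case True thus ?thesis by simp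
  next
    case False
    then obtain b ys where xs: "xs = b # ys" by (cases xs) auto
    have ab: "(a,b) \<in> Rel E T" using Cons.prems xs by (auto simp: Rel_def)
    have IH: "\<forall>y\<in>set xs. (hd xs, y) \<in> (Rel E T)\<^sup>* \<and> (y, last xs) \<in> (Rel E T)\<^sup>*"
      using Cons xs by auto
    show ?thesis
    proof
      fix y assume y: "y \<in> set (a # xs)"
      have bl: "(b, last xs) \<in> (Rel E T)\<^sup>*" using IH xs by auto
      show "(hd (a # xs), y) \<in> (Rel E T)\<^sup>* \<and> (y, last (a # xs)) \<in> (Rel E T)\<^sup>*"
      proof (cases "y = a")
        case True
        then show ?thesis using ab bl xs by auto
      next
        case False
        then have "y \<in> set xs" using y by auto
        then show ?thesis using IH ab xs
          by (auto intro: converse_rtrancl_into_rtrancl)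
      qed
    qed
  qed
qed

lemma Rel_sym_rtr:
  assumes "\<forall>x y. E x y \<longrightarrow> E y x" "(x, y) \<in> (Rel E T)\<^sup>*"
  shows "(y, x) \<in> (Rel E T)\<^sup>*"
proof -
  have "sym (Rel E T)" using assms(1) unfolding sym_def Rel_def by blast
  then have "sym ((Rel E T)\<^sup>*)" by (rule sym_rtrancl)
  then show ?thesis using assms(2) by (auto dest: symD)
qed

lemma Rel_mono_rtr:
  assumes "S \<subseteq> T" "(x, y) \<in> (Rel E S)\<^sup>*" shows "(x, y) \<in> (Rel E T)\<^sup>*"
proof -
  have "Rel E S \<subseteq> Rel E T" using assms(1) by (auto simp: Rel_def)
  then show ?thesis using assms(2) rtrancl_mono[of "Rel E S" "Rel E T"] by (simp add: subsetD)
qed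

lemma center_conn:
  assumes "\<forall>x y. E x y \<longrightarrow> E y x" "\<forall>u\<in>S. (c, u) \<in> (Rel E S)\<^sup>*"
  shows "induced_connected E S"
  unfolding induced_connected_def
proof (intro ballI)
  fix u w assume "u \<in> S" "w \<in> S"
  then have "(c, u) \<in> (Rel E S)\<^sup>*" "(c, w) \<in> (Rel E S)\<^sup>*"
    using assms(2) by auto
  then have "(u, c) \<in> (Rel E S)\<^sup>*" "(c, w) \<in> (Rel E S)\<^sup>*"
    using Rel_sym_rtr[OF assms(1)] by auto
  then have "(u, w) \<in> (Rel E S)\<^sup>*" by simp
  then show "(u, w) \<in> {(x, y). x \<in> S \<and> y \<in> S \<and> E x y}\<^sup>*" by (simp add: Rel_def)
qed

lemma block_exists:
  assumes "simple_graph V E" "biconnected_set V E S"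
  shows "\<exists>B. is_block V E B \<and> S \<subseteq> B"
proof -
  let ?F = "{T. biconnected_set V E T \<and> S \<subseteq> T}"
  have "?F \<subseteq> Pow V" by (auto simp: biconnected_set_def)
  moreover have "finite V" using assms(1) by (simp add: simple_graph_def)
  ultimately have fin: "finite ?F" by (meson finite_Pow_iff finite_subset)
  have ne: "?F \<noteq> {}" using assms(2) by auto
  obtain B where B: "B \<in> ?F" "\<forall>T\<in>?F. B \<le> T \<longrightarrow> B = T"
    using finite_has_maximal[OF fin ne] by blast
  have "is_block V E B" unfolding is_block_def
    using B by auto
  then show ?thesis using B by auto
qed

lemma clique_exists:
  assumes "simple_graph V E" "is_clique V E D"
  shows "\<exists>Q. is_maximal_clique V E Q \<and> D \<subseteq> Q"
proof -
  let ?F = "{T. is_clique V E T \<and> D \<subseteq> T}"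
  have "?F \<subseteq> Pow V" by (auto simp: is_clique_def)
  moreover have "finite V" using assms(1) by (simp add: simple_graph_def)
  ultimately have fin: "finite ?F" by (meson finite_Pow_iff finite_subset)
  have ne: "?F \<noteq> {}" using assms(2) by auto
  obtain B where B: "B \<in> ?F" "\<forall>T\<in>?F. B \<le> T \<longrightarrow> B = T"
    using finite_has_maximal[OF fin ne] by blast
  have "is_maximal_clique V E B" unfolding is_maximal_clique_def
    using B by auto
  then show ?thesis using B by auto
qed

lemma L_from_block:
  assumes bg: "block_graph V E" shows "propL V E"
  unfolding propL_def
proof (intro allI impI, elim conjE)
  fix v xs
  assume ch: "successively E xs" and di: "distinct xs" and sV: "set xs \<subseteq> V"
    and vn: "v \<notin> set xs" and ne: "xs \<noteq> []" and e1: "E v (hd xs)" and e2: "E v (last xs)"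
    and hl: "hd xs \<noteq> last xs"
  have sg: "simple_graph V E" using bg by (simp add: block_graph_def)
  have sym: "\<forall>x y. E x y \<longrightarrow> E y x" using sg by (simp add: simple_graph_def)
  have finV: "finite V" using sg by (simp add: simple_graph_def)
  define S where "S = insert v (set xs)"
  have vV: "v \<in> V" using e1 sg by (simp add: simple_graph_def)
  have SV: "S \<subseteq> V" using vV sV S_def by auto
  have hdin: "hd xs \<in> set xs" using ne by simp
  have lastin: "last xs \<in> set xs" using ne by simp
  have c2: "card S \<ge> 2"
  proof -
    have "{v, hd xs} \<subseteq> S" using hdin S_def by auto
    moreover have "finite S" using SV finV finite_subset by auto
    ultimately have "card {v, hd xs} \<le> card S" by (rule card_mono[rotated])
    moreover have "v \<noteq> hd xs" using vn hdin by auto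
    then have "card {v, hd xs} = 2" by simp
    ultimately show ?thesis by simp
  qed
  have cxs: "\<forall>y\<in>set xs. (hd xs, y) \<in> (Rel E (set xs))\<^sup>* \<and> (y, last xs) \<in> (Rel E (set xs))\<^sup>*"
    using chain_conn[OF ch _ ne] by blast
  have connS: "induced_connected E S"
  proof (rule center_conn[OF sym, of S v])
    show "\<forall>u\<in>S. (v, u) \<in> (Rel E S)\<^sup>*"
    proof
      fix u assume "u \<in> S"
      show "(v, u) \<in> (Rel E S)\<^sup>*"
      proof (cases "u = v")
        case True then show ?thesis by simp
      next
        case False
        then have u: "u \<in> set xs" using \<open>u \<in> S\<close> S_def by auto
        have "(hd xs, u) \<in> (Rel E S)\<^sup>*" using cxs u Rel_mono_rtr[of "set xs" S] S_def by blast
        moreover have "(v, hd xs) \<in> Rel E S" using e1 hdin S_def by (auto simp: Rel_def)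
        ultimately show ?thesis by (meson converse_rtrancl_into_rtrancl)
      qed
    qed
  qed
  have connSx: "\<forall>x\<in>S. induced_connected E (S - {x})"
  proof
    fix x assume "x \<in> S"
    show "induced_connected E (S - {x})"
    proof (cases "x = v")
      case True
      then have "S - {x} = set xs" using S_def vn by auto
      then show ?thesis using center_conn[OF sym, of "set xs" "hd xs"] cxs by auto
    next
      case False
      then have x: "x \<in> set xs" using \<open>x \<in> S\<close> S_def by auto
      obtain ys zs where xs: "xs = ys @ x # zs" using split_list[OF x] by blast
      have nys: "x \<notin> set ys" and nzs: "x \<notin> set zs" using di xs by auto
      define T where "T = S - {x}"
      have T: "T = insert v (set ys \<union> set zs)" using T_def S_def xs nys nzs False by auto
      have chys: "successively E ys" and chzs: "successively E zs"
        using ch xs by (auto simp: successively_append_iff successively_Cons)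
      show ?thesis unfolding T_def[symmetric]
      proof (rule center_conn[OF sym, of T v], intro ballI)
        fix u assume uT: "u \<in> T"
        show "(v, u) \<in> (Rel E T)\<^sup>*"
        proof (cases "u = v")
          case True then show ?thesis by simp
        next
          case False
          then have "u \<in> set ys \<or> u \<in> set zs" using uT T by auto
          then show ?thesis
          proof
            assume u: "u \<in> set ys"
            then have yne: "ys \<noteq> []" by auto
            have "hd ys = hd xs" using xs yne by simp
            then have "(v, hd ys) \<in> Rel E T" using e1 T yne hd_in_set[OF yne] by (auto simp: Rel_def)
            moreover have "(hd ys, u) \<in> (Rel E T)\<^sup>*"
              using chain_conn[OF chys _ yne, of T] T u by auto
            ultimately show ?thesis by (meson converse_rtrancl_into_rtrancl)
          next
            assume u: "u \<in> set zs"
            then have zne: "zs \<noteq> []" by auto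
            have "last zs = last xs" using xs zne by simp
            moreover have "E (last xs) v" using e2 sym by blast
            ultimately have "(last zs, v) \<in> Rel E T" using T zne last_in_set[OF zne] by (auto simp: Rel_def)
            moreover have "(u, last zs) \<in> (Rel E T)\<^sup>*"
              using chain_conn[OF chzs _ zne, of T] T u by auto
            ultimately have "(u, v) \<in> (Rel E T)\<^sup>*" by (meson rtrancl_into_rtrancl)
            then show ?thesis using Rel_sym_rtr[OF sym] by blast
          qed
        qed
      qed
    qed
  qed
  have "biconnected_set V E S" unfolding biconnected_set_def
    using SV c2 connS connSx by blast
  then obtain B where B: "is_block V E B" "S \<subseteq> B" using block_exists[OF sg] by blast
  then have "is_clique V E B" using bg by (simp add: block_graph_def)
  moreover have "hd xs \<in> B" "last xs \<in> B" using B hdin lastin S_def by auto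
  ultimately show "E (hd xs) (last xs)" using hl by (simp add: is_clique_def)
qed



lemma succ_mid: "successively E (xs @ ys @ zs) \<Longrightarrow> successively E ys"
  by (simp add: successively_append_iff)

lemma ex_vertex:
  assumes sg: "simple_graph V E" and pL: "propL V E" and ne: "V \<noteq> {}"
  shows "\<exists>v\<in>V. (\<exists>w\<in>V. w \<noteq> v \<and> closed_nbhd V E w = closed_nbhd V E v)
             \<or> (\<forall>a b. E v a \<and> E v b \<longrightarrow> a = b)"
proof -
  have sym: "\<And>x y. E x y \<Longrightarrow> E y x" using sg by (simp add: simple_graph_def)
  have irr: "\<And>x. \<not> E x x" using sg by (simp add: simple_graph_def)
  have inV: "\<And>x y. E x y \<Longrightarrow> x \<in> V \<and> y \<in> V" using sg by (simp add: simple_graph_def)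
  have finV: "finite V" using sg by (simp add: simple_graph_def)
  have L: "\<And>c xs. successively E xs \<Longrightarrow> distinct xs \<Longrightarrow> set xs \<subseteq> V \<Longrightarrow> c \<notin> set xs
     \<Longrightarrow> xs \<noteq> [] \<Longrightarrow> E c (hd xs) \<Longrightarrow> E c (last xs) \<Longrightarrow> hd xs \<noteq> last xs \<Longrightarrow> E (hd xs) (last xs)"
  proof -
    fix c xs
    assume a: "successively E xs" "distinct xs" "set xs \<subseteq> V" "c \<notin> set xs"
      "xs \<noteq> []" "E c (hd xs)" "E c (last xs)" "hd xs \<noteq> last xs"
    have "successively E xs \<and> distinct xs \<and> set xs \<subseteq> V \<and> c \<notin> set xs
     \<and> xs \<noteq> [] \<and> E c (hd xs) \<and> E c (last xs) \<and> hd xs \<noteq> last xs" using a by simp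
    then show "E (hd xs) (last xs)" using pL unfolding propL_def by (elim allE[of _ c] allE[of _ xs] impE)
  qed
  define P where "P = {xs. xs \<noteq> [] \<and> distinct xs \<and> set xs \<subseteq> V \<and> successively E xs}"
  have "P \<subseteq> {xs. set xs \<subseteq> V \<and> length xs \<le> card V}"
  proof
    fix xs assume "xs \<in> P"
    then have "distinct xs" "set xs \<subseteq> V" by (auto simp: P_def)
    then have "length xs \<le> card V" using card_mono[OF finV, of "set xs"] distinct_card[of xs] by simp
    then show "xs \<in> {xs. set xs \<subseteq> V \<and> length xs \<le> card V}" using \<open>set xs \<subseteq> V\<close> by simp
  qed
  then have finP: "finite P" using finite_lists_length_le[OF finV] finite_subset by blast
  obtain x0 where "x0 \<in> V" using ne by blast
  then have "[x0] \<in> P" by (simp add: P_def)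
  then have neP: "length ` P \<noteq> {}" by blast
  define m where "m = Max (length ` P)"
  have "m \<in> length ` P" unfolding m_def using finP neP by simp
  then obtain xs where xsP: "xs \<in> P" and lxs: "length xs = m" by blast
  have maxl: "\<And>ys. ys \<in> P \<Longrightarrow> length ys \<le> length xs"
    using lxs finP unfolding m_def by simp
  have xne: "xs \<noteq> []" and dxs: "distinct xs" and sxs: "set xs \<subseteq> V" and cxs: "successively E xs"
    using xsP by (auto simp: P_def)
  obtain v ys where xs: "xs = v # ys" using xne by (cases xs) auto
  have vV: "v \<in> V" using sxs xs by auto
  have nbin: "\<And>w. E v w \<Longrightarrow> w \<in> set xs"
  proof (rule ccontr)
    fix w assume "E v w" "w \<notin> set xs"
    moreover have "E w v" using sym[OF \<open>E v w\<close>] .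
    moreover have "w \<in> V" using inV[OF \<open>E v w\<close>] by blast
    ultimately have "w # xs \<in> P" using xsP xs by (auto simp: P_def)
    then show False using maxl[of "w # xs"] by simp
  qed
  show ?thesis
  proof (cases "\<forall>a b. E v a \<and> E v b \<longrightarrow> a = b")
    case True then show ?thesis using vV by blast
  next
    case False
    then obtain a b where ab: "E v a" "E v b" "a \<noteq> b" by blast
    have "a \<in> set xs" "b \<in> set xs" using nbin ab by blast+
    moreover have "a \<noteq> v" "b \<noteq> v" using ab irr by blast+
    ultimately have "a \<in> set ys" "b \<in> set ys" using xs by auto
    then obtain p zs where ys: "ys = p # zs" by (cases ys) auto
    have xs2: "xs = v # p # zs" using xs ys by simp
    have vp: "E v p" using cxs xs2 by simp
    have pV: "p \<in> V" using inV vp by blast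
    have dd: "v \<noteq> p" "v \<notin> set zs" "p \<notin> set zs" "distinct zs" using dxs xs2 by auto
    have czs: "successively E zs" using cxs xs2 by (auto simp: successively_Cons)
    have szs: "set zs \<subseteq> V" using sxs xs2 by auto
    have exw: "\<exists>w\<in>set zs. E v w"
    proof -
      have "a \<noteq> p \<or> b \<noteq> p" using ab by blast
      then show ?thesis using \<open>a \<in> set ys\<close> \<open>b \<in> set ys\<close> ys ab by auto
    qed
    have step1: "zs \<noteq> [] \<and> E v (hd zs)"
    proof -
      obtain as w' bs where sp: "zs = as @ w' # bs" "E v w'" "\<forall>y\<in>set as. \<not> E v y"
        using split_list_first_prop[OF exw] by blast
      show ?thesis
      proof (cases "as = []")
        case True then show ?thesis using sp by simp
      next
        case False
        define q where "q = last as"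
        have qas: "q \<in> set as" using False q_def by simp
        define Lp where "Lp = rev (v # p # as)"
        have c1: "successively E (v # p # as)"
          using succ_mid[of E "[]" "v # p # as" "w' # bs"] cxs xs2 sp(1) by simp
        have "successively (\<lambda>x y. E y x) (v # p # as)"
          by (rule successively_mono[OF c1]) (rule sym)
        then have cL: "successively E Lp" unfolding Lp_def successively_rev .
        have ch2: "E q w'" using czs sp(1) False q_def by (simp add: successively_append_iff)
        have "E (hd Lp) (last Lp)"
        proof (rule L[of Lp w'])
          show "successively E Lp" by (rule cL)
          show "distinct Lp" unfolding Lp_def using dxs xs2 sp(1) by auto
          show "set Lp \<subseteq> V" unfolding Lp_def using sxs xs2 sp(1) by auto
          show "w' \<notin> set Lp" unfolding Lp_def using dxs xs2 sp(1) by auto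
          show "Lp \<noteq> []" unfolding Lp_def by simp
          show "E w' (hd Lp)" unfolding Lp_def using sym[OF ch2] q_def False by (simp add: hd_rev)
          show "E w' (last Lp)" unfolding Lp_def using sym[OF sp(2)] by simp
          show "hd Lp \<noteq> last Lp" unfolding Lp_def using q_def False qas dd sp(1) by (auto simp: hd_rev)
        qed
        then have "E q v" unfolding Lp_def using q_def False by (simp add: hd_rev)
        then show ?thesis using sp(3) qas sym[OF \<open>E q v\<close>] by blast
      qed
    qed
    have step2: "\<And>w. E v w \<Longrightarrow> w \<noteq> p \<Longrightarrow> E p w"
    proof -
      fix w assume vw: "E v w" "w \<noteq> p"
      have "w \<noteq> v" using vw irr by blast
      then have "w \<in> set zs" using nbin[OF vw(1)] vw xs2 by auto
      then obtain as bs where sp: "zs = as @ w # bs" using split_list by metis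
      define Lp where "Lp = p # as @ [w]"
      have "E (hd Lp) (last Lp)"
      proof (rule L[of Lp v])
        show "successively E Lp" unfolding Lp_def
          using succ_mid[of E "[v]" "p # as @ [w]" bs] cxs xs2 sp by simp
        show "distinct Lp" unfolding Lp_def using dxs xs2 sp by auto
        show "set Lp \<subseteq> V" unfolding Lp_def using sxs xs2 sp by auto
        show "v \<notin> set Lp" unfolding Lp_def using dxs xs2 sp by auto
        show "Lp \<noteq> []" unfolding Lp_def by simp
        show "E v (hd Lp)" unfolding Lp_def using vp by simp
        show "E v (last Lp)" unfolding Lp_def using vw by simp
        show "hd Lp \<noteq> last Lp" unfolding Lp_def using vw by simp
      qed
      then show "E p w" unfolding Lp_def by simp
    qed
    have step3: "\<And>r. E p r \<Longrightarrow> r \<noteq> v \<Longrightarrow> E v r"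
    proof -
      fix r assume pr: "E p r" "r \<noteq> v"
      show "E v r"
      proof (cases "r \<in> set xs")
        case False
        obtain c cs where zs: "zs = c # cs" using step1 by (cases zs) auto
        have rV: "r \<in> V" using inV[OF pr(1)] by blast
        have rp: "E r p" using sym[OF pr(1)] .
        have pv: "E p v" using sym[OF vp] .
        have hz: "E v c" using step1 zs by simp
        have sc: "successively E (c # cs)" using czs zs by simp
        have s1: "successively E (r # p # v # c # cs)" using rp pv hz sc by simp
        have d1: "distinct (r # p # v # c # cs)" using False xs2 dxs zs by auto
        have st: "set (r # p # v # c # cs) \<subseteq> V" using rV sxs xs2 zs by auto
        have "r # p # v # zs \<in> P" unfolding P_def using s1 d1 st zs by blast
        then show ?thesis using maxl[of "r # p # v # zs"] xs2 by simp
      next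
        case True
        have "r \<noteq> p" using pr irr by blast
        then have "r \<in> set zs" using True pr xs2 by auto
        then obtain as bs where sp: "zs = as @ r # bs" using split_list by metis
        define Lp where "Lp = v # as @ [r]"
        have "hd (as @ [r]) = hd zs" using sp by (cases as) auto
        then have evh: "E v (hd (as @ [r]))" using step1 by simp
        have "E (hd Lp) (last Lp)"
        proof (rule L[of Lp p])
          have "successively E (as @ [r])" using succ_mid[of E "[]" "as @ [r]" bs] czs sp by simp
          then show "successively E Lp" unfolding Lp_def using evh
            by (simp add: successively_Cons)
          show "distinct Lp" unfolding Lp_def using dxs xs2 sp by auto
          show "set Lp \<subseteq> V" unfolding Lp_def using sxs xs2 sp vV by auto
          show "p \<notin> set Lp" unfolding Lp_def using dxs xs2 sp by auto
          show "Lp \<noteq> []" unfolding Lp_def by simp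
          show "E p (hd Lp)" unfolding Lp_def using sym[OF vp] by simp
          show "E p (last Lp)" unfolding Lp_def using pr by simp
          show "hd Lp \<noteq> last Lp" unfolding Lp_def using pr by simp
        qed
        then show "E v r" unfolding Lp_def by simp
      qed
    qed
    have "closed_nbhd V E p = closed_nbhd V E v"
    proof -
      have "\<And>z. z \<in> closed_nbhd V E p \<longleftrightarrow> z \<in> closed_nbhd V E v"
      proof -
        fix z
        have pv: "E p v" using sym[OF vp] .
        have "z = p \<or> E p z \<longleftrightarrow> z = v \<or> E v z"
          using step2[of z] step3[of z] vp pv by blast
        then show "z \<in> closed_nbhd V E p \<longleftrightarrow> z \<in> closed_nbhd V E v"
          unfolding closed_nbhd_def open_nbhd_def using inV[of p z] inV[of v z] by blast
      qed
      then show ?thesis by blast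
    qed
    then show ?thesis using vV pV dd by blast
  qed
qed



definition good :: "'a set \<Rightarrow> ('a \<Rightarrow> 'a \<Rightarrow> bool) \<Rightarrow> 'a set \<Rightarrow> bool" where
  "good V E C \<longleftrightarrow> C \<subseteq> V \<and> (\<forall>u\<in>V. closed_nbhd V E u \<inter> C \<noteq> {})
     \<and> (\<forall>u\<in>V. \<forall>w\<in>V. closed_nbhd V E u \<inter> C = closed_nbhd V E w \<inter> C
            \<longrightarrow> closed_nbhd V E u = closed_nbhd V E w)"

definition delv :: "('a \<Rightarrow> 'a \<Rightarrow> bool) \<Rightarrow> 'a \<Rightarrow> 'a \<Rightarrow> 'a \<Rightarrow> bool" where
  "delv E v = (\<lambda>x y. E x y \<and> x \<noteq> v \<and> y \<noteq> v)"

lemma sg_del: "simple_graph V E \<Longrightarrow> simple_graph (V - {v}) (delv E v)"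
  unfolding simple_graph_def delv_def by blast

lemma pL_del:
  assumes "propL V E" shows "propL (V - {v}) (delv E v)"
  unfolding propL_def
proof (intro allI impI, elim conjE)
  fix c xs
  assume a: "successively (delv E v) xs" "distinct xs" "set xs \<subseteq> V - {v}" "c \<notin> set xs"
      "xs \<noteq> []" "delv E v c (hd xs)" "delv E v c (last xs)" "hd xs \<noteq> last xs"
  have s: "successively E xs" using a(1) by (rule successively_mono) (simp add: delv_def)
  have "successively E xs \<and> distinct xs \<and> set xs \<subseteq> V \<and> c \<notin> set xs
     \<and> xs \<noteq> [] \<and> E c (hd xs) \<and> E c (last xs) \<and> hd xs \<noteq> last xs"
    using a s by (auto simp: delv_def)
  then have "E (hd xs) (last xs)" using assms unfolding propL_def
    by (elim allE[of _ c] allE[of _ xs] impE)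
  then show "delv E v (hd xs) (last xs)" using a(6,7) by (simp add: delv_def)
qed

lemma N_del: "y \<noteq> v \<Longrightarrow> closed_nbhd (V - {v}) (delv E v) y = closed_nbhd V E y - {v}"
  unfolding closed_nbhd_def open_nbhd_def delv_def by auto

lemma N_mem: "simple_graph V E \<Longrightarrow> y \<in> closed_nbhd V E x \<longleftrightarrow> y = x \<or> E x y"
  unfolding closed_nbhd_def open_nbhd_def simple_graph_def by auto

lemma N_sym: "simple_graph V E \<Longrightarrow> y \<in> closed_nbhd V E x \<longleftrightarrow> x \<in> closed_nbhd V E y"
  unfolding closed_nbhd_def open_nbhd_def simple_graph_def by blast

lemma case_twin:
  assumes sg: "simple_graph V E" and vV: "v \<in> V" and wV: "w \<in> V" and wv: "w \<noteq> v"
    and tw: "closed_nbhd V E w = closed_nbhd V E v"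
    and gd: "good (V - {v}) (delv E v) C"
  shows "good V E C"
proof -
  let ?N = "closed_nbhd V E" and ?N' = "closed_nbhd (V - {v}) (delv E v)"
  have CV: "C \<subseteq> V - {v}" using gd by (simp add: good_def)
  define \<phi> where "\<phi> y = (if y = v then w else y)" for y
  have phiV: "\<And>y. y \<in> V \<Longrightarrow> \<phi> y \<in> V - {v}" using wV wv by (auto simp: \<phi>_def)
  have T: "\<And>y. y \<in> V \<Longrightarrow> ?N y \<inter> C = ?N' (\<phi> y) \<inter> C"
  proof -
    fix y assume "y \<in> V"
    show "?N y \<inter> C = ?N' (\<phi> y) \<inter> C"
    proof (cases "y = v")
      case True
      then show ?thesis using N_del[OF wv, of V E] tw CV by (auto simp: \<phi>_def)
    next
      case False
      then show ?thesis using N_del[OF False, of V E] CV by (auto simp: \<phi>_def)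
    qed
  qed
  have Nphi: "\<And>y. ?N y = ?N (\<phi> y)" using tw by (simp add: \<phi>_def)
  have key: "\<And>a. a \<in> V - {v} \<Longrightarrow> v \<in> ?N a \<longleftrightarrow> w \<in> ?N' a"
  proof -
    fix a assume a: "a \<in> V - {v}"
    have "v \<in> ?N a \<longleftrightarrow> a \<in> ?N v" using N_sym[OF sg] by blast
    also have "\<dots> \<longleftrightarrow> a \<in> ?N w" using tw by simp
    also have "\<dots> \<longleftrightarrow> w \<in> ?N a" using N_sym[OF sg] by blast
    also have "\<dots> \<longleftrightarrow> w \<in> ?N' a" using N_del[of a v V E] a wv by auto
    finally show "v \<in> ?N a \<longleftrightarrow> w \<in> ?N' a" .
  qed
  have NN: "\<And>a b. a \<in> V - {v} \<Longrightarrow> b \<in> V - {v} \<Longrightarrow> ?N' a = ?N' b \<Longrightarrow> ?N a = ?N b"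
  proof -
    fix a b assume a: "a \<in> V - {v}" and b: "b \<in> V - {v}" and e: "?N' a = ?N' b"
    have "v \<in> ?N a \<longleftrightarrow> v \<in> ?N b" using key[OF a] key[OF b] e by simp
    moreover have "?N a - {v} = ?N b - {v}" using N_del[of a v V E] N_del[of b v V E] a b e by auto
    ultimately show "?N a = ?N b" by blast
  qed
  show ?thesis unfolding good_def
  proof (intro conjI ballI impI)
    show "C \<subseteq> V" using CV by blast
  next
    fix u assume u: "u \<in> V"
    show "?N u \<inter> C \<noteq> {}" using T[OF u] gd phiV[OF u] by (simp add: good_def)
  next
    fix u z assume u: "u \<in> V" and z: "z \<in> V" and e: "?N u \<inter> C = ?N z \<inter> C"
    then have "?N' (\<phi> u) \<inter> C = ?N' (\<phi> z) \<inter> C" using T by simp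
    then have "?N' (\<phi> u) = ?N' (\<phi> z)" using gd phiV[OF u] phiV[OF z] by (simp add: good_def)
    then have "?N (\<phi> u) = ?N (\<phi> z)" using NN phiV[OF u] phiV[OF z] by blast
    then show "?N u = ?N z" using Nphi by metis
  qed
qed

lemma case_iso:
  assumes sg: "simple_graph V E" and vV: "v \<in> V" and iso: "\<forall>a. \<not> E v a"
    and gd: "good (V - {v}) (delv E v) C"
  shows "good V E (insert v C)"
proof -
  let ?N = "closed_nbhd V E" and ?N' = "closed_nbhd (V - {v}) (delv E v)"
  have CV: "C \<subseteq> V - {v}" using gd by (simp add: good_def)
  have Nv: "?N v = {v}" using iso unfolding closed_nbhd_def open_nbhd_def by auto
  have Ny: "\<And>y. y \<noteq> v \<Longrightarrow> ?N y = ?N' y"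
  proof -
    fix y assume y: "y \<noteq> v"
    have "v \<notin> ?N y" using N_mem[OF sg, of v y] y N_sym[OF sg, of v y] Nv by auto
    then show "?N y = ?N' y" using N_del[OF y, of V E] by auto
  qed
  have T: "\<And>y. y \<noteq> v \<Longrightarrow> ?N y \<inter> insert v C = ?N' y \<inter> C"
  proof -
    fix y assume y: "y \<noteq> v"
    have "v \<notin> ?N' y" using N_del[OF y, of V E] by auto
    then show "?N y \<inter> insert v C = ?N' y \<inter> C" using Ny[OF y] by auto
  qed
  show ?thesis unfolding good_def
  proof (intro conjI ballI impI)
    show "insert v C \<subseteq> V" using CV vV by blast
  next
    fix u assume u: "u \<in> V"
    show "?N u \<inter> insert v C \<noteq> {}"
    proof (cases "u = v")
      case True then show ?thesis using Nv by simp
    next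
      case False then show ?thesis using T[OF False] gd u by (simp add: good_def)
    qed
  next
    fix u z assume u: "u \<in> V" and z: "z \<in> V" and e: "?N u \<inter> insert v C = ?N z \<inter> insert v C"
    have vin: "\<And>y. y \<noteq> v \<Longrightarrow> v \<notin> ?N y \<inter> insert v C"
      using T CV by auto
    show "?N u = ?N z"
    proof (cases "u = v \<or> z = v")
      case True
      then show ?thesis using e vin Nv by (metis IntI insertI1 singletonI)
    next
      case False
      then have "?N' u \<inter> C = ?N' z \<inter> C" using e T by simp
      then have "?N' u = ?N' z" using gd u z False by (simp add: good_def)
      then show ?thesis using Ny False by simp
    qed
  qed
qed



lemma case_leaf:
  assumes sg: "simple_graph V E" and vV: "v \<in> V" and vp: "E v p"
    and only: "\<forall>a. E v a \<longrightarrow> a = p"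
    and nt: "closed_nbhd V E p \<noteq> closed_nbhd V E v"
    and gd: "good (V - {v}) (delv E v) C"
  shows "\<exists>C2. good V E C2 \<and> card C2 \<le> card C + 1"
proof -
  let ?N = "closed_nbhd V E" and ?N' = "closed_nbhd (V - {v}) (delv E v)"
  have irr: "\<And>x. \<not> E x x" using sg by (simp add: simple_graph_def)
  have inV: "\<And>x y. E x y \<Longrightarrow> x \<in> V \<and> y \<in> V" using sg by (simp add: simple_graph_def)
  have finV: "finite V" using sg by (simp add: simple_graph_def)
  have CV: "C \<subseteq> V - {v}" using gd by (simp add: good_def)
  have finC: "finite C" using CV finV finite_subset by blast
  have pv: "p \<noteq> v" using vp irr by blast
  have pV: "p \<in> V" using inV[OF vp] by blast
  have Nv: "?N v = {v, p}"
  proof -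
    have "\<And>z. z \<in> ?N v \<longleftrightarrow> z = v \<or> z = p"
    proof -
      fix z
      have "z \<in> ?N v \<longleftrightarrow> z = v \<or> E v z" by (rule N_mem[OF sg])
      then show "z \<in> ?N v \<longleftrightarrow> z = v \<or> z = p" using only vp by blast
    qed
    then show ?thesis by blast
  qed
  have vNy: "\<And>y. v \<in> ?N y \<longleftrightarrow> y = v \<or> y = p"
  proof -
    fix y
    have "v \<in> ?N y \<longleftrightarrow> y \<in> ?N v" using N_sym[OF sg] by blast
    then show "v \<in> ?N y \<longleftrightarrow> y = v \<or> y = p" using Nv by auto
  qed
  have Ny: "\<And>y. y \<noteq> v \<Longrightarrow> y \<noteq> p \<Longrightarrow> ?N y = ?N' y"
  proof -
    fix y assume y: "y \<noteq> v" "y \<noteq> p"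
    have "v \<notin> ?N y" using vNy[of y] y by blast
    then show "?N y = ?N' y" using N_del[OF y(1), of V E] by blast
  qed
  have Np: "?N p = insert v (?N' p)" using N_del[OF pv, of V E] vNy[of p] by auto
  have dom': "\<And>y. y \<in> V - {v} \<Longrightarrow> ?N' y \<inter> C \<noteq> {}" using gd by (simp add: good_def)
  have sep': "\<And>y z. y \<in> V - {v} \<Longrightarrow> z \<in> V - {v} \<Longrightarrow> ?N' y \<inter> C = ?N' z \<inter> C \<Longrightarrow> ?N' y = ?N' z"
    using gd by (simp add: good_def)
  have vC: "v \<notin> C" using CV by blast
  have vN': "\<And>y. v \<notin> ?N' y \<or> y = v"
    unfolding closed_nbhd_def open_nbhd_def by auto
  show ?thesis
  proof (cases "?N' p \<inter> C = {p}")
    case False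
    define C2 where "C2 = insert v C"
    have Tv: "?N v \<inter> C2 = insert v ({p} \<inter> C)" using Nv C2_def by auto
    have Tp: "?N p \<inter> C2 = insert v (?N' p \<inter> C)" using Np C2_def by auto
    have Ty: "\<And>y. y \<noteq> v \<Longrightarrow> y \<noteq> p \<Longrightarrow> ?N y \<inter> C2 = ?N' y \<inter> C"
      using Ny vNy C2_def by auto
    have "good V E C2" unfolding good_def
    proof (intro conjI ballI impI)
      show "C2 \<subseteq> V" using CV vV C2_def by blast
    next
      fix u assume u: "u \<in> V"
      show "?N u \<inter> C2 \<noteq> {}"
        using Tv Tp Ty dom' u by (cases "u = v \<or> u = p") auto
    next
      fix u z assume u: "u \<in> V" and z: "z \<in> V" and e: "?N u \<inter> C2 = ?N z \<inter> C2"
      have vin: "\<And>y. v \<in> ?N y \<inter> C2 \<longleftrightarrow> y = v \<or> y = p" using vNy C2_def by auto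
      show "?N u = ?N z"
      proof (cases "u = v \<or> u = p")
        case True
        then have zz: "z = v \<or> z = p" using vin e by blast
        have "?N v \<inter> C2 \<noteq> ?N p \<inter> C2"
        proof
          assume "?N v \<inter> C2 = ?N p \<inter> C2"
          then have "insert v ({p} \<inter> C) = insert v (?N' p \<inter> C)" using Tv Tp by simp
          moreover have "v \<notin> ?N' p \<inter> C" using vC by blast
          moreover have "v \<notin> {p} \<inter> C" using vC by blast
          ultimately have "?N' p \<inter> C = {p} \<inter> C" by (metis insert_ident)
          then have "?N' p \<inter> C \<subseteq> {p}" by blast
          moreover have "?N' p \<inter> C \<noteq> {}" using dom' pV pv by blast
          ultimately show False using False by blast
        qed
        then show ?thesis using True zz e by auto
      next
        case False
        then have zz: "\<not> (z = v \<or> z = p)" using vin e by blast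
        then have "?N' u \<inter> C = ?N' z \<inter> C" using e Ty False by simp
        then have "?N' u = ?N' z" using sep' u z False zz by blast
        then show ?thesis using Ny False zz by simp
      qed
    qed
    moreover have "card C2 \<le> card C + 1" using finC C2_def by (simp add: card_insert_if)
    ultimately show ?thesis by blast
  next
    case True
    note Tp' = True
    have pC: "p \<in> C" using True by blast
    show ?thesis
    proof (cases "\<exists>x\<in>V - {v}. x \<noteq> p \<and> ?N' x = ?N' p")
      case False
      have "?N p \<noteq> {v, p}" using nt Nv by simp
      moreover have "{v, p} \<subseteq> ?N p" using Np by (auto simp: closed_nbhd_def)
      ultimately obtain u where uN: "u \<in> ?N p" "u \<noteq> v" "u \<noteq> p" by blast
      have pu: "E p u" using uN N_mem[OF sg, of u p] by blast
      have uV: "u \<in> V" using inV[OF pu] by blast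
      have uN': "u \<in> ?N' p" using uN N_del[OF pv, of V E] by blast
      have uC: "u \<notin> C" using uN' True uN by blast
      define C2 where "C2 = insert u C"
      have Tv: "?N v \<inter> C2 = {p}" using Nv C2_def pC vC uN by auto
      have Ty: "\<And>y. y \<noteq> v \<Longrightarrow> ?N y \<inter> C2 = (?N' y \<inter> C) \<union> (?N' y \<inter> {u})"
        using N_del vC uN C2_def by fastforce
      have good2: "good V E C2" unfolding good_def
      proof (intro conjI ballI impI)
        show "C2 \<subseteq> V" using CV uV C2_def by blast
      next
        fix y assume y: "y \<in> V"
        show "?N y \<inter> C2 \<noteq> {}"
          using Tv Ty dom' y by (cases "y = v") auto
      next
        have bk: "\<And>y. y \<noteq> v \<Longrightarrow> ?N' y \<inter> C = (?N y \<inter> C2) - {u}"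
          using Ty uC by auto
        have nov: "\<And>z. z \<in> V \<Longrightarrow> z \<noteq> v \<Longrightarrow> ?N z \<inter> C2 \<noteq> ?N v \<inter> C2"
        proof
          fix z assume z: "z \<in> V" "z \<noteq> v" and e: "?N z \<inter> C2 = ?N v \<inter> C2"
          then have "?N' z \<inter> C = {p}" using bk[of z] Tv uN by auto
          then have "?N' z \<inter> C = ?N' p \<inter> C" using True by simp
          then have "?N' z = ?N' p" using sep' z pV pv by blast
          then have "z = p" using False z by blast
          then have "u \<in> ?N z \<inter> C2" using uN C2_def by blast
          then show False using e Tv uN by auto
        qed
        fix y z assume y: "y \<in> V" and z: "z \<in> V" and e: "?N y \<inter> C2 = ?N z \<inter> C2"
        show "?N y = ?N z"
        proof (cases "y = v \<or> z = v")
          case True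
          then show ?thesis using nov y z e by metis
        next
          case False
          then have "?N' y \<inter> C = ?N' z \<inter> C" using bk e by simp
          then have eq': "?N' y = ?N' z" using sep' y z False by blast
          show ?thesis
          proof (cases "y = p \<or> z = p")
            case True
            have yz: "y \<in> V - {v}" "z \<in> V - {v}" using y z False by auto
            have "y = z"
            proof (rule ccontr)
              assume "y \<noteq> z"
              then have "(y \<noteq> p \<and> ?N' y = ?N' p) \<or> (z \<noteq> p \<and> ?N' z = ?N' p)"
                using True eq' by auto
              then show False using \<open>\<not> (\<exists>x\<in>V - {v}. x \<noteq> p \<and> ?N' x = ?N' p)\<close> yz by blast
            qed
            then show ?thesis by simp
          next
            case False2: False
            then show ?thesis using Ny eq' False by simp
          qed
        qed
      qed
      moreover have "card C2 \<le> card C + 1" using finC C2_def by (simp add: card_insert_if)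
      ultimately show ?thesis by blast
    next
      case True
      then obtain x where xV: "x \<in> V - {v}" and xp: "x \<noteq> p" and Nx: "?N' x = ?N' p" by blast
      have "x \<in> ?N' x" by (simp add: closed_nbhd_def)
      then have xNp: "x \<in> ?N' p" using Nx by simp
      have xC: "x \<notin> C" using xNp Tp' xp by blast
      have xv: "x \<noteq> v" using xV by blast
      define C2 where "C2 = insert v (insert x (C - {p}))"
      have Tv: "?N v \<inter> C2 = {v}" using Nv C2_def xp pv by auto
      have Tp: "?N p \<inter> C2 = {v, x}" using Np C2_def Tp' xNp by auto
      have Ty: "\<And>y. y \<noteq> v \<Longrightarrow> y \<noteq> p \<Longrightarrow> ?N y \<inter> C2 = (?N' y \<inter> C - {p}) \<union> (?N' y \<inter> {x})"
        using Ny vNy C2_def by auto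
      have xiff: "\<And>y. x \<in> ?N' y \<longleftrightarrow> p \<in> ?N' y"
      proof -
        fix y
        have "x \<in> ?N' y \<longleftrightarrow> y \<in> ?N' x" using N_sym[OF sg_del[OF sg]] by blast
        also have "\<dots> \<longleftrightarrow> y \<in> ?N' p" using Nx by simp
        also have "\<dots> \<longleftrightarrow> p \<in> ?N' y" using N_sym[OF sg_del[OF sg]] by blast
        finally show "x \<in> ?N' y \<longleftrightarrow> p \<in> ?N' y" .
      qed
      have bk: "\<And>y. y \<noteq> v \<Longrightarrow> y \<noteq> p \<Longrightarrow>
          ?N' y \<inter> C = (?N y \<inter> C2 - {x}) \<union> (if x \<in> ?N y \<inter> C2 then {p} else {})"
      proof -
        fix y assume y: "y \<noteq> v" "y \<noteq> p"
        show "?N' y \<inter> C = (?N y \<inter> C2 - {x}) \<union> (if x \<in> ?N y \<inter> C2 then {p} else {})"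
        proof (cases "x \<in> ?N' y")
          case True
          then have "p \<in> ?N' y" using xiff by blast
          then show ?thesis using Ty[OF y] True xC pC by auto
        next
          case False
          then have "p \<notin> ?N' y" using xiff by blast
          then show ?thesis using Ty[OF y] False xC by auto
        qed
      qed
      have vin: "\<And>y. v \<in> ?N y \<inter> C2 \<longleftrightarrow> y = v \<or> y = p" using vNy C2_def by auto
      have good2: "good V E C2" unfolding good_def
      proof (intro conjI ballI impI)
        show "C2 \<subseteq> V" using CV vV xV C2_def by blast
      next
        fix y assume y: "y \<in> V"
        show "?N y \<inter> C2 \<noteq> {}"
        proof (cases "y = v \<or> y = p")
          case True then show ?thesis using vin by blast
        next
          case False
          show ?thesis
          proof (cases "x \<in> ?N' y")
            case True then show ?thesis using Ty False by auto
          next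
            case False2: False
            then have "p \<notin> ?N' y" using xiff by blast
            then show ?thesis using Ty False dom' y by auto
          qed
        qed
      next
        fix y z assume y: "y \<in> V" and z: "z \<in> V" and e: "?N y \<inter> C2 = ?N z \<inter> C2"
        show "?N y = ?N z"
        proof (cases "y = v \<or> y = p")
          case True
          then have zz: "z = v \<or> z = p" using vin e by blast
          have "?N v \<inter> C2 \<noteq> ?N p \<inter> C2" using Tv Tp xv by auto
          then show ?thesis using True zz e by auto
        next
          case False
          then have zz: "\<not> (z = v \<or> z = p)" using vin e by blast
          then have "?N' y \<inter> C = ?N' z \<inter> C" using bk[of y] bk[of z] e False by simp
          then have "?N' y = ?N' z" using sep' y z False zz by blast
          then show ?thesis using Ny False zz by simp
        qed
      qed
      have "card C2 \<le> card (insert x (C - {p})) + 1" using C2_def finC by (simp add: card_insert_if)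
      also have "\<dots> \<le> card (C - {p}) + 2" using finC by (simp add: card_insert_if)
      also have "\<dots> = card C + 1"
      proof -
        have "card C \<noteq> 0" using pC finC by auto
        then show ?thesis using card_Diff_singleton[OF pC] by simp
      qed
      finally show ?thesis using good2 by blast
    qed
  qed
qed



lemma MC_fin:
  assumes "simple_graph V E" shows "finite {Q. is_maximal_clique V E Q}"
proof -
  have "{Q. is_maximal_clique V E Q} \<subseteq> Pow V"
    by (auto simp: is_maximal_clique_def is_clique_def)
  moreover have "finite V" using assms by (simp add: simple_graph_def)
  ultimately show ?thesis by (meson finite_Pow_iff finite_subset)
qed

lemma MC_del_sub:
  assumes sg: "simple_graph V E"
    and D: "is_maximal_clique (V - {v}) (delv E v) D"
  shows "\<exists>Q. is_maximal_clique V E Q \<and> D = Q - {v}"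
proof -
  have Dc: "is_clique (V - {v}) (delv E v) D" using D by (simp add: is_maximal_clique_def)
  have "is_clique V E D" using Dc by (auto simp: is_clique_def delv_def)
  then obtain Q where Q: "is_maximal_clique V E Q" "D \<subseteq> Q" using clique_exists[OF sg] by blast
  have "is_clique (V - {v}) (delv E v) (Q - {v})"
    using Q(1) by (auto simp: is_maximal_clique_def is_clique_def delv_def)
  moreover have "D \<subseteq> Q - {v}" using Q(2) Dc by (auto simp: is_clique_def)
  ultimately have "Q - {v} = D" using D unfolding is_maximal_clique_def by blast
  then show ?thesis using Q by blast
qed

lemma nQ_le:
  assumes sg: "simple_graph V E"
  shows "n_Q (V - {v}) (delv E v) \<le> n_Q V E"
proof -
  let ?M = "{Q. is_maximal_clique V E Q}" and ?M' = "{Q. is_maximal_clique (V - {v}) (delv E v) Q}"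
  have "?M' \<subseteq> (\<lambda>Q. Q - {v}) ` ?M" using MC_del_sub[OF sg] by blast
  then have "card ?M' \<le> card ((\<lambda>Q. Q - {v}) ` ?M)"
    using MC_fin[OF sg] by (intro card_mono) auto
  also have "\<dots> \<le> card ?M" by (rule card_image_le[OF MC_fin[OF sg]])
  finally show ?thesis by (simp add: n_Q_def)
qed

lemma nQ_lt:
  assumes sg: "simple_graph V E"
    and Q0: "is_maximal_clique V E Q0"
    and nQ0: "\<not> is_maximal_clique (V - {v}) (delv E v) (Q0 - {v})"
  shows "n_Q (V - {v}) (delv E v) + 1 \<le> n_Q V E"
proof -
  let ?M = "{Q. is_maximal_clique V E Q}" and ?M' = "{Q. is_maximal_clique (V - {v}) (delv E v) Q}"
  have "?M' \<subseteq> (\<lambda>Q. Q - {v}) ` (?M - {Q0})"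
  proof
    fix D assume "D \<in> ?M'"
    then obtain Q where "is_maximal_clique V E Q" "D = Q - {v}"
      using MC_del_sub[OF sg] by blast
    moreover have "Q \<noteq> Q0" using nQ0 \<open>D \<in> ?M'\<close> calculation by auto
    ultimately show "D \<in> (\<lambda>Q. Q - {v}) ` (?M - {Q0})" by blast
  qed
  then have "card ?M' \<le> card ((\<lambda>Q. Q - {v}) ` (?M - {Q0}))"
    using MC_fin[OF sg] by (intro card_mono) auto
  also have "\<dots> \<le> card (?M - {Q0})" by (rule card_image_le) (use MC_fin[OF sg] in blast)
  also have "\<dots> = card ?M - 1" using Q0 MC_fin[OF sg] by (simp add: card_Diff_singleton)
  finally have "card ?M' \<le> card ?M - 1" .
  moreover have "card ?M \<noteq> 0" using Q0 MC_fin[OF sg] by auto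
  ultimately show ?thesis by (simp add: n_Q_def)
qed

lemma main:
  "finite V \<Longrightarrow> simple_graph V E \<Longrightarrow> propL V E \<Longrightarrow> \<exists>C. good V E C \<and> card C \<le> n_Q V E"
proof (induction "card V" arbitrary: V E rule: less_induct)
  case less
  have sg: "simple_graph V E" by (rule less.prems(2))
  have irr: "\<And>x. \<not> E x x" using sg by (simp add: simple_graph_def)
  have inV: "\<And>x y. E x y \<Longrightarrow> x \<in> V \<and> y \<in> V" using sg by (simp add: simple_graph_def)
  have finV: "finite V" by (rule less.prems(1))
  show ?case
  proof (cases "V = {}")
    case True
    have "good V E {}" using True by (simp add: good_def)
    then show ?thesis by fastforce
  next
    case False
    obtain v where vV: "v \<in> V" and vc: "(\<exists>w\<in>V. w \<noteq> v \<and> closed_nbhd V E w = closed_nbhd V E v)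
             \<or> (\<forall>a b. E v a \<and> E v b \<longrightarrow> a = b)"
      using ex_vertex[OF sg less.prems(3) False] by blast
    have lt: "card (V - {v}) < card V" by (rule card_Diff1_less[OF finV vV])
    have ex: "\<exists>C. good (V - {v}) (delv E v) C \<and> card C \<le> n_Q (V - {v}) (delv E v)"
    proof (rule less.hyps[OF lt])
      show "finite (V - {v})" using finV by simp
      show "simple_graph (V - {v}) (delv E v)" by (rule sg_del[OF sg])
      show "propL (V - {v}) (delv E v)" by (rule pL_del[OF less.prems(3)])
    qed
    then obtain C where gC: "good (V - {v}) (delv E v) C" and cC: "card C \<le> n_Q (V - {v}) (delv E v)"
      by blast
    have CV: "C \<subseteq> V - {v}" using gC by (simp add: good_def)
    have finC: "finite C" using CV finV finite_subset by blast
    have twin_case: "\<exists>C. good V E C \<and> card C \<le> n_Q V E"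
      if w: "w \<in> V" "w \<noteq> v" "closed_nbhd V E w = closed_nbhd V E v" for w
    proof -
      have "good V E C" using case_twin[OF sg vV w gC] .
      moreover have "card C \<le> n_Q V E" using cC nQ_le[OF sg, of v] by simp
      ultimately show ?thesis by blast
    qed
    show ?thesis
    proof (cases "\<exists>w\<in>V. w \<noteq> v \<and> closed_nbhd V E w = closed_nbhd V E v")
      case True then show ?thesis using twin_case by blast
    next
      case False
      then have deg: "\<forall>a b. E v a \<and> E v b \<longrightarrow> a = b" using vc by blast
      show ?thesis
      proof (cases "\<exists>p. E v p")
        case False
        then have iso: "\<forall>a. \<not> E v a" by blast
        have g2: "good V E (insert v C)" by (rule case_iso[OF sg vV iso gC])
        have Q0: "is_maximal_clique V E {v}"
          unfolding is_maximal_clique_def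
        proof (intro conjI allI impI)
          show "is_clique V E {v}" using vV by (simp add: is_clique_def)
        next
          fix D assume D: "is_clique V E D \<and> {v} \<subseteq> D"
          have "D \<subseteq> {v}"
          proof
            fix d assume "d \<in> D"
            then have "d = v \<or> E v d" using D by (auto simp: is_clique_def)
            then show "d \<in> {v}" using iso by blast
          qed
          then show "D = {v}" using D by blast
        qed
        have "card (insert v C) \<le> n_Q V E"
        proof (cases "V - {v} = {}")
          case True
          then have "C = {}" using CV by blast
          moreover have "n_Q V E \<noteq> 0"
          proof -
            have "{v} \<in> {Q. is_maximal_clique V E Q}" using Q0 by simp
            then have "{Q. is_maximal_clique V E Q} \<noteq> {}" by blast
            then show ?thesis unfolding n_Q_def using MC_fin[OF sg] card_0_eq by blast
          qed
          ultimately show ?thesis by simp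
        next
          case False
          then obtain x where x: "x \<in> V - {v}" by blast
          have "\<not> is_maximal_clique (V - {v}) (delv E v) ({v} - {v})"
          proof
            assume m: "is_maximal_clique (V - {v}) (delv E v) ({v} - {v})"
            have "is_clique (V - {v}) (delv E v) {x}" using x by (simp add: is_clique_def)
            then have "{x} = {}" using m unfolding is_maximal_clique_def by blast
            then show False by simp
          qed
          then have "n_Q (V - {v}) (delv E v) + 1 \<le> n_Q V E" by (rule nQ_lt[OF sg Q0])
          then show ?thesis using cC finC by (simp add: card_insert_if)
        qed
        then show ?thesis using g2 by blast
      next
        case True
        then obtain p where vp: "E v p" by blast
        have only: "\<forall>a. E v a \<longrightarrow> a = p" using deg vp by blast
        have pV: "p \<in> V" and pv: "p \<noteq> v" using inV[OF vp] irr vp by auto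
        show ?thesis
        proof (cases "closed_nbhd V E p = closed_nbhd V E v")
          case True then show ?thesis using twin_case[OF pV pv] by blast
        next
          case nt: False
          obtain C2 where g2: "good V E C2" and c2: "card C2 \<le> card C + 1"
            using case_leaf[OF sg vV vp only nt gC] by blast
          have pvE: "E p v" using sg vp unfolding simple_graph_def by blast
          have Q0: "is_maximal_clique V E {v, p}"
            unfolding is_maximal_clique_def
          proof (intro conjI allI impI)
            show "is_clique V E {v, p}" using vV pV vp pvE by (auto simp: is_clique_def)
          next
            fix D assume D: "is_clique V E D \<and> {v, p} \<subseteq> D"
            have "D \<subseteq> {v, p}"
            proof
              fix d assume "d \<in> D"
              then have "d = v \<or> E v d" using D by (auto simp: is_clique_def)
              then show "d \<in> {v, p}" using only by blast
            qed
            then show "D = {v, p}" using D by blast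
          qed
          have "closed_nbhd V E p \<noteq> {v, p}"
          proof
            assume "closed_nbhd V E p = {v, p}"
            moreover have "closed_nbhd V E v = {v, p}"
              using only vp pV unfolding closed_nbhd_def open_nbhd_def by blast
            ultimately show False using nt by simp
          qed
          moreover have "{v, p} \<subseteq> closed_nbhd V E p"
            using vV pvE unfolding closed_nbhd_def open_nbhd_def by blast
          ultimately obtain u where u: "u \<in> closed_nbhd V E p" "u \<noteq> v" "u \<noteq> p" by blast
          have pu: "E p u" using u N_mem[OF sg, of u p] by blast
          have uV: "u \<in> V" using inV[OF pu] by blast
          have "\<not> is_maximal_clique (V - {v}) (delv E v) ({v, p} - {v})"
          proof
            assume m: "is_maximal_clique (V - {v}) (delv E v) ({v, p} - {v})"
            have e: "{v, p} - {v} = {p}" using pv by auto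
            have up: "E u p" using sg pu unfolding simple_graph_def by blast
            have "is_clique (V - {v}) (delv E v) {p, u}"
              using pV uV pv u pu up unfolding is_clique_def delv_def by auto
            then have "{p, u} = {p}" using m e unfolding is_maximal_clique_def by auto
            then show False using u by auto
          qed
          then have "n_Q (V - {v}) (delv E v) + 1 \<le> n_Q V E" by (rule nQ_lt[OF sg Q0])
          then have "card C2 \<le> n_Q V E" using c2 cC by simp
          then show ?thesis using g2 by blast
        qed
      qed
    qed
  qed
qed



theorem theorem2p1:
  fixes V :: "'a set" and E :: "'a \<Rightarrow> 'a \<Rightarrow> bool"
  assumes "block_graph V E"
    and "identifiable V E"
  shows "gamma_ID V E \<le> n_Q V E"
proof -
  have sg: "simple_graph V E" using assms(1) by (simp add: block_graph_def)
  have finV: "finite V" using sg by (simp add: simple_graph_def)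
  obtain C where gC: "good V E C" and cC: "card C \<le> n_Q V E"
    using main[OF finV sg L_from_block[OF assms(1)]] by blast
  have idc: "is_id_code V E C" unfolding is_id_code_def
  proof (intro conjI ballI impI)
    show "C \<subseteq> V" using gC by (simp add: good_def)
  next
    fix u assume "u \<in> V"
    then show "closed_nbhd V E u \<inter> C \<noteq> {}" using gC by (simp add: good_def)
  next
    fix u w assume u: "u \<in> V" and w: "w \<in> V" and ne: "u \<noteq> w"
    show "closed_nbhd V E u \<inter> C \<noteq> closed_nbhd V E w \<inter> C"
    proof
      assume e: "closed_nbhd V E u \<inter> C = closed_nbhd V E w \<inter> C"
      have "closed_nbhd V E u = closed_nbhd V E w"
        using gC u w e unfolding good_def by blast
      then show False using assms(2) u w ne unfolding identifiable_def by blast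
    qed
  qed
  have "\<exists>C'. is_id_code V E C' \<and> card C' = card C" using idc by blast
  then have "gamma_ID V E \<le> card C" unfolding gamma_ID_def by (rule Least_le)
  then show ?thesis using cC by simp
qed

end
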